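(* For any two $n$-qubit density matrices $\rho,\sigma$, $|\mathcal{C}(\rho)-\mathcal{C}(\sigma)|\le\|\rho-\sigma\|_1$.
   Context: For an $n$-qubit density matrix $\rho$, $\mathcal{C}(\rho)=1-\mathrm{Tr}[(\bigotimes_{i=1}^n\Pi_+^{(i)})\rho^{\otimes 2}]$, where $\Pi_+^{(i)}=\frac12(\mathbb{1}+\mathbb{F}^{(i)})$ and $\mathbb{F}^{(i)}$ swaps the $i$-th qubits of the two copies. $\|\cdot\|_1$ is the trace norm. *)

theory Defs
  imports "Jordan_Normal_Form.Matrix" "Jordan_Normal_Form.Schur_Decomposition"
begin

definition mtrace :: "complex mat \<Rightarrow> complex" where
  "mtrace A = (\<Sum>i<dim_row A. A $$ (i, i))"

definition psd :: "nat \<Rightarrow> complex mat \<Rightarrow> bool" where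
  "psd d A \<longleftrightarrow> A \<in> carrier_mat d d \<and> mat_adjoint A = A \<and>
     (\<forall>v \<in> carrier_vec d. 0 \<le> Re ((\<Sum>i<d. cnj (v $ i) * (A *\<^sub>v v) $ i)))"

(* n-qubit density matrix: 2^n x 2^n, positive semidefinite, unit trace;
   computational basis state |b_1 ... b_n> has index with bit i (i<n) = b_i *)
definition density :: "nat \<Rightarrow> complex mat \<Rightarrow> bool" where
  "density n \<rho> \<longleftrightarrow> psd (2^n) \<rho> \<and> mtrace \<rho> = 1"

definition kron :: "complex mat \<Rightarrow> complex mat \<Rightarrow> complex mat" where
  "kron A B = mat (dim_row A * dim_row B) (dim_col A * dim_col B)
     (\<lambda>(i, j). A $$ (i div dim_row B, j div dim_col B) * B $$ (i mod dim_row B, j mod dim_col B))"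

definition qbit :: "nat \<Rightarrow> nat \<Rightarrow> nat" where
  "qbit i a = (a div 2^i) mod 2"

(* action of the swap F^(i) on a basis index of the two-copy space
   (index = a * 2^n + b, a the first copy, b the second copy):
   exchanges bit i of a with bit i of b *)
definition swap_idx :: "nat \<Rightarrow> nat \<Rightarrow> nat \<Rightarrow> nat" where
  "swap_idx n i k =
     (let a = k div 2^n; b = k mod 2^n;
          a' = a - qbit i a * 2^i + qbit i b * 2^i;
          b' = b - qbit i b * 2^i + qbit i a * 2^i
      in a' * 2^n + b')"

definition swapF :: "nat \<Rightarrow> nat \<Rightarrow> complex mat" where
  "swapF n i = mat (2^n * 2^n) (2^n * 2^n) (\<lambda>(r, c). if r = swap_idx n i c then 1 else 0)"

definition PiPlus :: "nat \<Rightarrow> nat \<Rightarrow> complex mat" where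
  "PiPlus n i = (1/2 :: complex) \<cdot>\<^sub>m (1\<^sub>m (2^n * 2^n) + swapF n i)"

(* \<Otimes>_{i=1}^n \<Pi>_+^(i): the operators act on disjoint qubit pairs, so their tensor
   product is the (commuting) product of the individual operators on the two-copy space *)
definition PiAll :: "nat \<Rightarrow> complex mat" where
  "PiAll n = foldr (\<lambda>i M. PiPlus n i * M) [0..<n] (1\<^sub>m (2^n * 2^n))"

definition Cmeas :: "nat \<Rightarrow> complex mat \<Rightarrow> real" where
  "Cmeas n \<rho> = 1 - Re (mtrace (PiAll n * kron \<rho> \<rho>))"

definition psd_sqrt :: "complex mat \<Rightarrow> complex mat" where
  "psd_sqrt A = (THE B. psd (dim_row A) B \<and> B * B = A)"

definition trace_norm :: "complex mat \<Rightarrow> real" where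
  "trace_norm A = Re (mtrace (psd_sqrt (mat_adjoint A * A)))"

end

theory Submission
  imports Defs
begin

definition upd :: "nat \<Rightarrow> nat \<Rightarrow> bool \<Rightarrow> nat" where
  "upd i x b = (if b then set_bit i x else unset_bit i x)"

lemma qbit_bit: "qbit i a = of_bool (bit a i)"
  unfolding qbit_def bit_iff_odd by (simp add: odd_iff_mod_2_eq_one even_iff_mod_2_eq_zero)

lemma unset_bit_nat_eq: "unset_bit i (x::nat) = x - of_bool (bit x i) * 2^i"
proof -
  have "set_bit i (unset_bit i x) = set_bit i x"
    by (rule bit_eqI) (auto simp: bit_set_bit_iff bit_unset_bit_iff)
  moreover have "set_bit i (unset_bit i x) = unset_bit i x + 2^i"
    by (simp add: set_bit_eq bit_unset_bit_iff)
  moreover have "set_bit i x = x + of_bool (\<not> bit x i) * 2^i" by (rule set_bit_eq)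
  ultimately show ?thesis by (cases "bit x i") auto
qed

lemma bit_le: "bit (x::nat) i \<Longrightarrow> 2^i \<le> x"
proof -
  assume "bit x i"
  then have "x div 2^i \<noteq> 0" unfolding bit_iff_odd by (metis even_zero)
  then show ?thesis by (simp add: div_eq_0_iff not_less)
qed

lemma upd_eq: "x - qbit i x * 2^i + qbit i y * 2^i = upd i x (bit y i)"
  unfolding upd_def qbit_bit
  by (cases "bit x i"; cases "bit y i") (auto simp: set_bit_eq unset_bit_nat_eq bit_le)

lemma bit_upd: "bit (upd i x b) j = (if j = i then b else bit x j)"
  unfolding upd_def by (auto simp: bit_set_bit_iff bit_unset_bit_iff)

lemma upd_less: assumes "x < 2^n" "i < n" shows "upd i x b < 2^n"
proof -
  have "take_bit n (upd i x b) = upd i x b"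
  proof (rule bit_eqI)
    fix m
    have "bit x m \<Longrightarrow> m < n" using assms(1)
      by (metis bit_take_bit_iff take_bit_nat_eq_self_iff)
    then show "bit (take_bit n (upd i x b)) m = bit (upd i x b) m"
      using assms(2) by (auto simp: bit_take_bit_iff bit_upd)
  qed
  then show ?thesis using take_bit_nat_eq_self_iff by blast
qed

lemma upd_upd_same: "upd i (upd i x b) c = upd i x c"
  by (rule bit_eqI) (simp add: bit_upd)

lemma upd_id: "upd i x (bit x i) = x"
  by (rule bit_eqI) (simp add: bit_upd)

lemma upd_comm: "i \<noteq> j \<Longrightarrow> upd i (upd j x c) b = upd j (upd i x b) c"
  by (rule bit_eqI) (simp add: bit_upd)

lemma swap_idx_alt: "swap_idx n i k =
   upd i (k div 2^n) (bit (k mod 2^n) i) * 2^n + upd i (k mod 2^n) (bit (k div 2^n) i)"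
  unfolding swap_idx_def Let_def upd_eq by simp

lemma pair_less: assumes "a < (N::nat)" "b < N" shows "a * N + b < N * N"
proof -
  have "a * N + b < a * N + N" using assms by simp
  also have "... = (a+1) * N" by simp
  also have "... \<le> N * N" using assms by (intro mult_right_mono) auto
  finally show ?thesis .
qed

lemma swap_idx_less: assumes "k < 2^n * 2^n" "i < n" shows "swap_idx n i k < 2^n * 2^n"
proof -
  let ?N = "2^n :: nat"
  have a: "k div ?N < ?N" using assms(1) by (simp add: less_mult_imp_div_less)
  have b: "k mod ?N < ?N" by simp
  have "upd i (k div ?N) (bit (k mod ?N) i) < ?N" using upd_less[OF a assms(2)] .
  moreover have "upd i (k mod ?N) (bit (k div ?N) i) < ?N" using upd_less[OF b assms(2)] .
  ultimately show ?thesis unfolding swap_idx_alt by (rule pair_less)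
qed

lemma swap_idx_div: assumes "i < n"
  shows "swap_idx n i k div 2^n = upd i (k div 2^n) (bit (k mod 2^n) i)"
    and "swap_idx n i k mod 2^n = upd i (k mod 2^n) (bit (k div 2^n) i)"
proof -
  have b: "upd i (k mod 2^n) (bit (k div 2^n) i) < 2^n" by (rule upd_less[OF _ assms]) simp
  show "swap_idx n i k div 2^n = upd i (k div 2^n) (bit (k mod 2^n) i)"
    unfolding swap_idx_alt using b by simp
  show "swap_idx n i k mod 2^n = upd i (k mod 2^n) (bit (k div 2^n) i)"
    unfolding swap_idx_alt using b by simp
qed

lemma eq_by_divmod: "(x::nat) div N = y div N \<Longrightarrow> x mod N = y mod N \<Longrightarrow> x = y"
  by (metis div_mult_mod_eq)

lemma swap_idx_invol: assumes "i < n" shows "swap_idx n i (swap_idx n i k) = k"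
  by (rule eq_by_divmod[where N="2^n"]) (simp_all add: swap_idx_div[OF assms] bit_upd upd_upd_same upd_id)

lemma swap_idx_comm: assumes "i < n" "j < n"
  shows "swap_idx n i (swap_idx n j k) = swap_idx n j (swap_idx n i k)"
proof (cases "i = j")
  case True then show ?thesis by simp
next
  case False
  show ?thesis
    by (rule eq_by_divmod[where N="2^n"]) (simp_all add: swap_idx_div[OF assms(1)] swap_idx_div[OF assms(2)] bit_upd upd_comm False not_sym[OF False])
qed

definition ip :: "nat \<Rightarrow> (nat \<Rightarrow> complex) \<Rightarrow> (nat \<Rightarrow> complex) \<Rightarrow> complex" where
  "ip d x y = (\<Sum>i<d. cnj (x i) * y i)"

definition mv :: "nat \<Rightarrow> complex mat \<Rightarrow> (nat \<Rightarrow> complex) \<Rightarrow> nat \<Rightarrow> complex" where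
  "mv d A x i = (if i < d then (\<Sum>j<d. A $$ (i, j) * x j) else 0)"

definition hermd :: "nat \<Rightarrow> complex mat \<Rightarrow> bool" where
  "hermd d A \<longleftrightarrow> A \<in> carrier_mat d d \<and> (\<forall>i<d. \<forall>j<d. A $$ (j, i) = cnj (A $$ (i, j)))"

lemma hermdD: "hermd d A \<Longrightarrow> i < d \<Longrightarrow> j < d \<Longrightarrow> A $$ (j, i) = cnj (A $$ (i, j))"
  unfolding hermd_def by blast

lemma hermd_carrier: "hermd d A \<Longrightarrow> A \<in> carrier_mat d d"
  unfolding hermd_def by blast

lemma mult_entry: assumes "A \<in> carrier_mat a b" "B \<in> carrier_mat b c" "i < a" "j < c"
  shows "(A * B) $$ (i, j) = (\<Sum>m<b. A $$ (i, m) * B $$ (m, j))"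
  using assms by (auto simp: scalar_prod_def lessThan_atLeast0 intro!: sum.cong)

lemma ip_herm_move: assumes "hermd d A" shows "ip d x (mv d A y) = ip d (mv d A x) y"
proof -
  have "ip d x (mv d A y) = (\<Sum>i<d. \<Sum>j<d. cnj (x i) * A $$ (i, j) * y j)"
    unfolding ip_def mv_def by (simp add: sum_distrib_left mult.assoc)
  also have "\<dots> = (\<Sum>j<d. \<Sum>i<d. cnj (x i) * A $$ (i, j) * y j)" by (rule sum.swap)
  also have "\<dots> = (\<Sum>j<d. (\<Sum>i<d. cnj (A $$ (j, i) * x i)) * y j)"
  proof (rule sum.cong[OF refl])
    fix j assume "j \<in> {..<d}"
    then have j: "j < d" by simp
    have "\<And>i. i < d \<Longrightarrow> cnj (A $$ (j, i)) = A $$ (i, j)"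
      using hermdD[OF assms _ j] by (metis complex_cnj_cnj)
    then show "(\<Sum>i<d. cnj (x i) * A $$ (i, j) * y j) = (\<Sum>i<d. cnj (A $$ (j, i) * x i)) * y j"
      unfolding sum_distrib_right by (intro sum.cong) auto
  qed
  also have "\<dots> = ip d (mv d A x) y"
    unfolding ip_def mv_def by (simp add: cnj_sum)
  finally show ?thesis .
qed

lemma mv_mult: assumes "A \<in> carrier_mat d d" "B \<in> carrier_mat d d"
  shows "mv d (A * B) x = mv d A (mv d B x)"
proof
  fix i show "mv d (A * B) x i = mv d A (mv d B x) i"
  proof (cases "i < d")
    case True
    have "mv d (A * B) x i = (\<Sum>j<d. \<Sum>m<d. A $$ (i, m) * B $$ (m, j) * x j)"
      unfolding mv_def using True mult_entry[OF assms True] by (simp add: sum_distrib_right)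
    also have "\<dots> = (\<Sum>m<d. \<Sum>j<d. A $$ (i, m) * B $$ (m, j) * x j)" by (rule sum.swap)
    also have "\<dots> = mv d A (mv d B x) i"
      unfolding mv_def using True by (simp add: sum_distrib_left mult.assoc)
    finally show ?thesis .
  qed (simp add: mv_def)
qed

lemma ip_self: "ip d x x = of_real (\<Sum>i<d. (cmod (x i))^2)"
  unfolding ip_def by (simp add: complex_norm_square[symmetric] mult.commute)

lemma ip_self_Re: "0 \<le> Re (ip d x x)"
  unfolding ip_self by (simp add: sum_nonneg)

lemma ip_diff_left: "ip d (\<lambda>i. x i - y i) z = ip d x z - ip d y z"
  unfolding ip_def by (simp add: algebra_simps sum_subtractf)
lemma ip_diff_right: "ip d z (\<lambda>i. x i - y i) = ip d z x - ip d z y"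
  unfolding ip_def by (simp add: algebra_simps sum_subtractf)

lemma proj_bounds: assumes "hermd d Q" "Q * Q = Q"
  shows "0 \<le> Re (ip d x (mv d Q x)) \<and> Re (ip d x (mv d Q x)) \<le> Re (ip d x x)"
proof -
  have Q: "Q \<in> carrier_mat d d" using assms(1) hermd_carrier by auto
  have 1: "ip d x (mv d Q x) = ip d (mv d Q x) (mv d Q x)"
    by (metis Q assms(2) mv_mult ip_herm_move[OF assms(1)])
  have 2: "ip d (mv d Q x) x = ip d x (mv d Q x)"
    using ip_herm_move[OF assms(1)] by simp
  have "ip d (\<lambda>i. x i - mv d Q x i) (\<lambda>i. x i - mv d Q x i) = ip d x x - ip d x (mv d Q x)"
    unfolding ip_diff_left ip_diff_right using 1 2 by simp
  then have "0 \<le> Re (ip d x x - ip d x (mv d Q x))" by (metis ip_self_Re)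
  then show ?thesis using 1 ip_self_Re[of d "mv d Q x"] by simp
qed

lemma PiPlus_carrier: "PiPlus n i \<in> carrier_mat (2^n * 2^n) (2^n * 2^n)"
  unfolding PiPlus_def swapF_def by auto

lemma PiPlus_dims[simp]: "dim_row (PiPlus n i) = 2^n * 2^n" "dim_col (PiPlus n i) = 2^n * 2^n"
  unfolding PiPlus_def swapF_def by auto

lemma PiPlus_entry: assumes "r < 2^n * 2^n" "c < 2^n * 2^n"
  shows "PiPlus n i $$ (r, c) = (of_bool (r = c) + of_bool (r = swap_idx n i c)) / 2"
  using assms unfolding PiPlus_def swapF_def by auto

lemma sum_delta: assumes "r < (M::nat)" shows "(\<Sum>m<M. of_bool (r = m) * (g m :: complex)) = g r"
proof -
  have "(\<Sum>m<M. of_bool (r = m) * g m) = (\<Sum>m<M. if m = r then g r else 0)"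
    by (intro sum.cong) auto
  also have "\<dots> = g r" using assms by (simp add: sum.delta)
  finally show ?thesis .
qed

lemma swap_eq_iff: "i < n \<Longrightarrow> (r = swap_idx n i m) = (m = swap_idx n i r)"
  using swap_idx_invol by metis

lemma sum_delta_s: assumes "i < n" "r < 2^n * 2^n"
  shows "(\<Sum>m<2^n * 2^n. of_bool (r = swap_idx n i m) * (g m :: complex)) = g (swap_idx n i r)"
proof -
  have "(\<Sum>m<2^n * 2^n. of_bool (r = swap_idx n i m) * g m) = (\<Sum>m<2^n * 2^n. of_bool (swap_idx n i r = m) * g m)"
    using swap_eq_iff[OF assms(1)] by (intro sum.cong) auto
  also have "\<dots> = g (swap_idx n i r)" by (rule sum_delta[OF swap_idx_less[OF assms(2,1)]])
  finally show ?thesis .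
qed

lemma PiPlus_mult_entry: assumes "i < n" "j < n" "r < 2^n * 2^n" "c < 2^n * 2^n"
  shows "(PiPlus n i * PiPlus n j) $$ (r, c) =
    (of_bool (r = c) + of_bool (r = swap_idx n j c) + of_bool (r = swap_idx n i c)
     + of_bool (r = swap_idx n i (swap_idx n j c))) / 4"
proof -
  let ?M = "2^n * 2^n :: nat"
  let ?g = "\<lambda>m. PiPlus n j $$ (m, c)"
  have "(PiPlus n i * PiPlus n j) $$ (r, c) = (\<Sum>m<?M. PiPlus n i $$ (r, m) * ?g m)"
    by (rule mult_entry[OF PiPlus_carrier PiPlus_carrier assms(3,4)])
  also have "\<dots> = (\<Sum>m<?M. (of_bool (r = m) * ?g m + of_bool (r = swap_idx n i m) * ?g m) / 2)"
    using assms by (intro sum.cong) (auto simp: PiPlus_entry algebra_simps add_divide_distrib)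
  also have "\<dots> = ((\<Sum>m<?M. of_bool (r = m) * ?g m) + (\<Sum>m<?M. of_bool (r = swap_idx n i m) * ?g m)) / 2"
    by (simp add: sum_divide_distrib[symmetric] sum.distrib)
  also have "\<dots> = (?g r + ?g (swap_idx n i r)) / 2"
    using sum_delta[OF assms(3)] sum_delta_s[OF assms(1,3)] by simp
  also have "\<dots> = (of_bool (r = c) + of_bool (r = swap_idx n j c) + of_bool (r = swap_idx n i c)
     + of_bool (r = swap_idx n i (swap_idx n j c))) / 4"
  proof -
    have s: "swap_idx n i r < ?M" using swap_idx_less assms by auto
    have e1: "(swap_idx n i r = c) = (r = swap_idx n i c)" using swap_eq_iff[OF assms(1)] by metis
    have e2: "(swap_idx n i r = swap_idx n j c) = (r = swap_idx n i (swap_idx n j c))"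
      using swap_eq_iff[OF assms(1)] by metis
    show ?thesis using assms s unfolding PiPlus_entry[OF assms(3,4)] PiPlus_entry[OF s assms(4)] e1 e2
      by (simp add: field_simps)
  qed
  finally show ?thesis .
qed

lemma PiPlus_comm: assumes "i < n" "j < n" shows "PiPlus n i * PiPlus n j = PiPlus n j * PiPlus n i"
proof (rule eq_matI)
  fix r c assume rc: "r < dim_row (PiPlus n j * PiPlus n i)" "c < dim_col (PiPlus n j * PiPlus n i)"
  then have r: "r < 2^n*2^n" and c: "c < 2^n*2^n" by auto
  show "(PiPlus n i * PiPlus n j) $$ (r, c) = (PiPlus n j * PiPlus n i) $$ (r, c)"
    unfolding PiPlus_mult_entry[OF assms r c] PiPlus_mult_entry[OF assms(2,1) r c]
    swap_idx_comm[OF assms] by (simp add: algebra_simps)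
qed (insert PiPlus_carrier, auto)

lemma PiPlus_idem: assumes "i < n" shows "PiPlus n i * PiPlus n i = PiPlus n i"
proof (rule eq_matI)
  fix r c assume rc: "r < dim_row (PiPlus n i)" "c < dim_col (PiPlus n i)"
  then have r: "r < 2^n*2^n" and c: "c < 2^n*2^n" by auto
  show "(PiPlus n i * PiPlus n i) $$ (r, c) = PiPlus n i $$ (r, c)"
    unfolding PiPlus_mult_entry[OF assms assms r c] PiPlus_entry[OF r c] swap_idx_invol[OF assms]
    by (simp add: field_simps)
qed (insert PiPlus_carrier, auto)

lemma PiPlus_herm: assumes "i < n" shows "hermd (2^n*2^n) (PiPlus n i)"
  unfolding hermd_def
proof (intro conjI allI impI)
  fix r c :: nat assume r: "r < 2^n*2^n" and c: "c < 2^n*2^n"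
  have e: "(c = swap_idx n i r) = (r = swap_idx n i c)" using swap_eq_iff[OF assms] by metis
  show "PiPlus n i $$ (c, r) = cnj (PiPlus n i $$ (r, c))"
    unfolding PiPlus_entry[OF r c] PiPlus_entry[OF c r] e by (auto simp: eq_commute[of r c])
qed (rule PiPlus_carrier)

lemma herm_mult_comm: assumes "hermd d A" "hermd d B" "A * B = B * A" shows "hermd d (A * B)"
proof -
  have A: "A \<in> carrier_mat d d" and B: "B \<in> carrier_mat d d" using assms hermd_carrier by auto
  show ?thesis unfolding hermd_def
  proof (intro conjI allI impI)
    fix i j assume i: "i < d" and j: "j < d"
    have "(A * B) $$ (j, i) = (\<Sum>m<d. A $$ (j, m) * B $$ (m, i))" by (rule mult_entry[OF A B j i])
    also have "\<dots> = (\<Sum>m<d. cnj (B $$ (i, m) * A $$ (m, j)))"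
      using hermdD[OF assms(1) _ j] hermdD[OF assms(2) i] by (intro sum.cong) auto
    also have "\<dots> = cnj ((B * A) $$ (i, j))" by (simp add: mult_entry[OF B A i j] cnj_sum)
    finally show "(A * B) $$ (j, i) = cnj ((A * B) $$ (i, j))" using assms(3) by simp
  qed (use A B in auto)
qed

lemma foldr_Pi: assumes "distinct xs" "set xs \<subseteq> {..<n}"
  shows "foldr (\<lambda>i M. PiPlus n i * M) xs (1\<^sub>m (2^n*2^n)) \<in> carrier_mat (2^n*2^n) (2^n*2^n) \<and>
    hermd (2^n*2^n) (foldr (\<lambda>i M. PiPlus n i * M) xs (1\<^sub>m (2^n*2^n))) \<and>
    foldr (\<lambda>i M. PiPlus n i * M) xs (1\<^sub>m (2^n*2^n)) * foldr (\<lambda>i M. PiPlus n i * M) xs (1\<^sub>m (2^n*2^n)) = foldr (\<lambda>i M. PiPlus n i * M) xs (1\<^sub>m (2^n*2^n)) \<and>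
    (\<forall>j<n. j \<notin> set xs \<longrightarrow> PiPlus n j * foldr (\<lambda>i M. PiPlus n i * M) xs (1\<^sub>m (2^n*2^n)) = foldr (\<lambda>i M. PiPlus n i * M) xs (1\<^sub>m (2^n*2^n)) * PiPlus n j)"
  using assms
proof (induction xs)
  case Nil
  have "hermd (2^n*2^n) (1\<^sub>m (2^n*2^n))" unfolding hermd_def by auto
  moreover have "PiPlus n j * 1\<^sub>m (2^n*2^n) = 1\<^sub>m (2^n*2^n) * PiPlus n j" for j
    using PiPlus_carrier[of n j] by simp
  ultimately show ?case by auto
next
  case (Cons i xs)
  let ?M = "2^n*2^n :: nat"
  define R where "R = foldr (\<lambda>i M. PiPlus n i * M) xs (1\<^sub>m ?M)"
  have i: "i < n" and ixs: "i \<notin> set xs" using Cons.prems by auto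
  have IH: "R \<in> carrier_mat ?M ?M" "hermd ?M R" "R * R = R"
    "\<And>j. j < n \<Longrightarrow> j \<notin> set xs \<Longrightarrow> PiPlus n j * R = R * PiPlus n j"
    using Cons.IH Cons.prems unfolding R_def by auto
  have P: "PiPlus n i \<in> carrier_mat ?M ?M" by (rule PiPlus_carrier)
  have c1: "PiPlus n i * R \<in> carrier_mat ?M ?M" using P IH(1) by auto
  have h: "hermd ?M (PiPlus n i * R)"
    by (rule herm_mult_comm[OF PiPlus_herm[OF i] IH(2) IH(4)[OF i ixs]])
  have idem: "PiPlus n i * R * (PiPlus n i * R) = PiPlus n i * R"
  proof -
    have "PiPlus n i * R * (PiPlus n i * R) = PiPlus n i * (R * PiPlus n i) * R"
      using P IH(1) by (simp add: assoc_mult_mat[of _ ?M ?M _ ?M _ ?M])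
    also have "\<dots> = PiPlus n i * (PiPlus n i * R) * R" using IH(4)[OF i ixs] by simp
    also have "\<dots> = (PiPlus n i * PiPlus n i) * (R * R)"
      using P IH(1) by (simp add: assoc_mult_mat[of _ ?M ?M _ ?M _ ?M])
    also have "\<dots> = PiPlus n i * R" using PiPlus_idem[OF i] IH(3) by simp
    finally show ?thesis .
  qed
  have comm: "PiPlus n j * (PiPlus n i * R) = (PiPlus n i * R) * PiPlus n j"
    if j: "j < n" "j \<notin> set (i # xs)" for j
  proof -
    have Pj: "PiPlus n j \<in> carrier_mat ?M ?M" by (rule PiPlus_carrier)
    have "PiPlus n j * (PiPlus n i * R) = (PiPlus n j * PiPlus n i) * R"
      using P Pj IH(1) by (simp add: assoc_mult_mat[of _ ?M ?M _ ?M _ ?M])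
    also have "\<dots> = (PiPlus n i * PiPlus n j) * R" using PiPlus_comm[OF i j(1)] by simp
    also have "\<dots> = PiPlus n i * (R * PiPlus n j)"
      using P Pj IH(1) j IH(4)[of j] by (simp add: assoc_mult_mat[of _ ?M ?M _ ?M _ ?M])
    also have "\<dots> = (PiPlus n i * R) * PiPlus n j"
      using P Pj IH(1) by (simp add: assoc_mult_mat[of _ ?M ?M _ ?M _ ?M])
    finally show ?thesis .
  qed
  show ?case using c1 h idem comm unfolding R_def by simp
qed

lemma PiAll_props: "hermd (2^n*2^n) (PiAll n) \<and> PiAll n * PiAll n = PiAll n"
proof -
  have "set [0..<n] \<subseteq> {..<n}" by auto
  from foldr_Pi[OF distinct_upt this] show ?thesis unfolding PiAll_def by blast
qed

lemma PiAll_bounds: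
  "0 \<le> Re (ip (2^n*2^n) x (mv (2^n*2^n) (PiAll n) x)) \<and>
   Re (ip (2^n*2^n) x (mv (2^n*2^n) (PiAll n) x)) \<le> Re (ip (2^n*2^n) x x)"
  using proj_bounds PiAll_props by blast

definition orthonormal :: "nat \<Rightarrow> nat \<Rightarrow> (nat \<Rightarrow> nat \<Rightarrow> complex) \<Rightarrow> bool" where
  "orthonormal d k u \<longleftrightarrow> (\<forall>j<k. \<forall>l<k. ip d (u j) (u l) = of_bool (j = l))"

definition eigen :: "nat \<Rightarrow> complex mat \<Rightarrow> nat \<Rightarrow> (nat \<Rightarrow> nat \<Rightarrow> complex) \<Rightarrow> (nat \<Rightarrow> real) \<Rightarrow> bool" where
  "eigen d A k u lam \<longleftrightarrow> (\<forall>j<k. \<forall>i<d. mv d A (u j) i = of_real (lam j) * u j i)"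

lemma ip_cnj: "cnj (ip d x y) = ip d y x"
  unfolding ip_def by (simp add: cnj_sum mult.commute)

lemma mtrace_comm: assumes "X \<in> carrier_mat a b" "Y \<in> carrier_mat b a"
  shows "mtrace (X * Y) = mtrace (Y * X)"
proof -
  have "mtrace (X * Y) = (\<Sum>i<a. \<Sum>m<b. X $$ (i, m) * Y $$ (m, i))"
    unfolding mtrace_def using assms mult_entry[OF assms] by (intro sum.cong) auto
  also have "\<dots> = (\<Sum>m<b. \<Sum>i<a. Y $$ (m, i) * X $$ (i, m))"
    by (subst sum.swap) (simp add: mult.commute)
  also have "\<dots> = mtrace (Y * X)"
    unfolding mtrace_def using assms mult_entry[OF assms(2,1)] by (intro sum.cong) auto
  finally show ?thesis .
qed

lemma mtrace_similar: assumes "similar_mat_wit A T P Q" "A \<in> carrier_mat d d"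
  shows "mtrace A = mtrace T"
proof -
  note w = similar_mat_witD2[OF assms(2,1)]
  have "mtrace A = mtrace ((P * T) * Q)" using w by simp
  also have "\<dots> = mtrace (Q * (P * T))" by (rule mtrace_comm) (use w in auto)
  also have "Q * (P * T) = (Q * P) * T" by (rule assoc_mult_mat[symmetric]) (use w in auto)
  also have "(Q * P) * T = T" using w by simp
  finally show ?thesis .
qed

lemma mv_vec: assumes "A \<in> carrier_mat d d" "v \<in> carrier_vec d" "i < d"
  shows "(A *\<^sub>v v) $ i = mv d A (\<lambda>j. v $ j) i"
  using assms by (auto simp: mv_def scalar_prod_def lessThan_atLeast0 intro!: sum.cong)

lemma mv_rank: assumes "A \<in> carrier_mat d d" "i < d"
  shows "mv d (mat d d (\<lambda>(a,b). A $$ (a,b) - (\<Sum>l<k. \<alpha> l * u l a * cnj (u l b)))) x i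
       = mv d A x i - (\<Sum>l<k. \<alpha> l * u l i * ip d (u l) x)"
proof -
  have "mv d (mat d d (\<lambda>(a,b). A $$ (a,b) - (\<Sum>l<k. \<alpha> l * u l a * cnj (u l b)))) x i
     = (\<Sum>j<d. A $$ (i, j) * x j) - (\<Sum>j<d. (\<Sum>l<k. \<alpha> l * u l i * cnj (u l j)) * x j)"
    using assms unfolding mv_def by (simp add: left_diff_distrib sum_subtractf)
  also have "(\<Sum>j<d. (\<Sum>l<k. \<alpha> l * u l i * cnj (u l j)) * x j) = (\<Sum>j<d. \<Sum>l<k. \<alpha> l * u l i * cnj (u l j) * x j)"
    by (simp add: sum_distrib_right)
  also have "(\<Sum>j<d. \<Sum>l<k. \<alpha> l * u l i * cnj (u l j) * x j) = (\<Sum>l<k. \<alpha> l * u l i * ip d (u l) x)"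
    unfolding ip_def by (subst sum.swap) (simp add: sum_distrib_left mult.assoc)
  finally show ?thesis using assms unfolding mv_def by simp
qed

lemma mv_scale: "mv d A (\<lambda>i. x i / s) i = mv d A x i / s"
  unfolding mv_def by (simp add: sum_divide_distrib)

lemma ip_scale_right: "ip d x (\<lambda>i. y i / s) = ip d x y / s"
  unfolding ip_def by (simp add: sum_divide_distrib)

lemma ip_scale_left_real: "ip d (\<lambda>i. of_real r * y i) x = of_real r * ip d y x"
  unfolding ip_def by (simp add: sum_distrib_left mult.assoc)

lemma ip_cong: "(\<And>i. i < d \<Longrightarrow> x i = x' i) \<Longrightarrow> (\<And>i. i < d \<Longrightarrow> y i = y' i) \<Longrightarrow> ip d x y = ip d x' y'"
  unfolding ip_def by simp

lemma ip_mv_cong: "(\<And>i. i < d \<Longrightarrow> y i = y' i) \<Longrightarrow> mv d A y = mv d A y'"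
  unfolding mv_def by (intro ext) simp

lemma ip_lin_left: "ip d (\<lambda>i. a * x i) y = cnj a * ip d x y"
  unfolding ip_def by (simp add: sum_distrib_left mult.assoc)
lemma ip_lin_right: "ip d x (\<lambda>i. a * y i) = a * ip d x y"
  unfolding ip_def by (simp add: sum_distrib_left mult.left_commute)

lemma ip_self_pos: assumes "i < d" "x i \<noteq> 0" shows "0 < Re (ip d x x)"
proof -
  have "0 < (cmod (x i))^2" using assms by simp
  also have "\<dots> \<le> (\<Sum>i<d. (cmod (x i))^2)"
    by (rule member_le_sum) (use assms in auto)
  finally show ?thesis unfolding ip_self by simp
qed

lemma ip_self_real: "ip d x x = of_real (Re (ip d x x))"
  unfolding ip_self by simp

lemma spec_step:
  assumes A: "hermd d A" and k: "k < d" and on: "orthonormal d k u" and ev: "eigen d A k u lam"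
  shows "\<exists>w e. ip d w w = 1 \<and> (\<forall>j<k. ip d (u j) w = 0) \<and> (\<forall>i<d. mv d A w i = of_real e * w i)"
proof -
  have Ac: "A \<in> carrier_mat d d" using A hermd_carrier by blast
  define c :: real where "c = (Re (mtrace A) - (\<Sum>j<k. lam j)) / real (d - k) + 1"
  define \<alpha> where "\<alpha> = (\<lambda>l. complex_of_real (lam l - c))"
  define Mm where "Mm = mat d d (\<lambda>(a,b). A $$ (a,b) - (\<Sum>l<k. \<alpha> l * u l a * cnj (u l b)))"
  have Mc: "Mm \<in> carrier_mat d d" by (simp add: Mm_def)
  have Mh: "hermd d Mm" unfolding hermd_def
  proof (intro conjI allI impI)
    fix i j assume i: "i < d" and j: "j < d"
    show "Mm $$ (j, i) = cnj (Mm $$ (i, j))"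
      using hermdD[OF A i j] i j by (simp add: Mm_def \<alpha>_def cnj_sum ac_simps)
  qed (rule Mc)
  have onD: "\<And>j l. j < k \<Longrightarrow> l < k \<Longrightarrow> ip d (u j) (u l) = of_bool (j = l)"
    using on unfolding orthonormal_def by blast
  have trM: "mtrace Mm = mtrace A - (\<Sum>l<k. \<alpha> l)"
  proof -
    have "mtrace Mm = (\<Sum>a<d. A $$ (a,a)) - (\<Sum>a<d. \<Sum>l<k. \<alpha> l * u l a * cnj (u l a))"
      unfolding mtrace_def Mm_def by (simp add: sum_subtractf)
    also have "(\<Sum>a<d. \<Sum>l<k. \<alpha> l * u l a * cnj (u l a)) = (\<Sum>l<k. \<alpha> l * ip d (u l) (u l))"
      unfolding ip_def by (subst sum.swap) (simp add: sum_distrib_left ac_simps)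
    also have "\<dots> = (\<Sum>l<k. \<alpha> l)" using onD by simp
    finally show ?thesis unfolding mtrace_def using Ac by simp
  qed
  obtain as where cp: "char_poly Mm = (\<Prod>a\<leftarrow>as. [:- a, 1:])" and las: "length as = d"
    using char_poly_factorized[OF Mc] by blast
  obtain T P Q where sd: "schur_decomposition Mm as = (T, P, Q)" by (cases "schur_decomposition Mm as") auto
  have sim: "similar_mat_wit Mm T P Q" and dT: "diag_mat T = as"
    using schur_decomposition[OF Mc cp sd] by auto
  have Tc: "T \<in> carrier_mat d d" using similar_mat_witD2[OF Mc sim] by auto
  have trT: "mtrace Mm = (\<Sum>i<d. T $$ (i,i))"
    using mtrace_similar[OF sim Mc] Tc unfolding mtrace_def by simp
  have "\<exists>i<d. T $$ (i,i) \<noteq> of_real c"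
  proof (rule ccontr)
    assume "\<not> ?thesis"
    then have "mtrace Mm = of_nat d * of_real c" unfolding trT by simp
    then have "Re (mtrace Mm) = real d * c" by simp
    moreover have "Re (mtrace Mm) = Re (mtrace A) - (\<Sum>l<k. (lam l - c))"
      using trM unfolding \<alpha>_def by (simp add: Re_sum)
    ultimately have "Re (mtrace A) - (\<Sum>l<k. (lam l - c)) = real d * c" by simp
    moreover have "real (d - k) * (c - 1) = Re (mtrace A) - (\<Sum>j<k. lam j)"
      unfolding c_def using k by simp
    ultimately show False using k by (simp add: sum_subtractf algebra_simps of_nat_diff)
  qed
  then obtain i0 where i0: "i0 < d" and ne: "T $$ (i0,i0) \<noteq> of_real c" by blast
  define e where "e = T $$ (i0, i0)"
  have "e \<in> set as" unfolding dT[symmetric] diag_mat_def e_def using i0 Tc by auto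
  then have "poly (char_poly Mm) e = 0" unfolding cp by (rule linear_poly_root)
  then have "eigenvalue Mm e" using eigenvalue_root_char_poly[OF Mc] by simp
  then obtain v where "eigenvector Mm v e" unfolding eigenvalue_def by blast
  then have v: "v \<in> carrier_vec d" and v0: "v \<noteq> 0\<^sub>v d" and Mv: "Mm *\<^sub>v v = e \<cdot>\<^sub>v v"
    unfolding eigenvector_def using Mc by auto
  define f where "f = (\<lambda>j. v $ j)"
  have Mf: "mv d Mm f i = e * f i" if "i < d" for i
    using mv_vec[OF Mc v that] arg_cong[OF Mv, of "\<lambda>w. w $ i"] v that unfolding f_def by simp
  have Mu: "mv d Mm (u j) i = of_real c * u j i" if j: "j < k" and i: "i < d" for j i
  proof -
    have "mv d Mm (u j) i = mv d A (u j) i - (\<Sum>l<k. \<alpha> l * u l i * ip d (u l) (u j))"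
      unfolding Mm_def by (rule mv_rank[OF Ac i])
    also have "(\<Sum>l<k. \<alpha> l * u l i * ip d (u l) (u j)) = (\<Sum>l<k. if l = j then \<alpha> j * u j i else 0)"
      using onD j by (intro sum.cong) auto
    also have "\<dots> = \<alpha> j * u j i" using j by (simp add: sum.delta)
    finally show ?thesis using ev j i unfolding eigen_def \<alpha>_def by (simp add: algebra_simps)
  qed
  have orth: "ip d (u j) f = 0" if j: "j < k" for j
  proof -
    have "ip d (u j) (mv d Mm f) = ip d (mv d Mm (u j)) f" by (rule ip_herm_move[OF Mh])
    moreover have "ip d (u j) (mv d Mm f) = e * ip d (u j) f"
      using ip_cong[of d "u j" "u j" "mv d Mm f" "\<lambda>i. e * f i"] Mf ip_lin_right by simp
    moreover have "ip d (mv d Mm (u j)) f = of_real c * ip d (u j) f"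
      using ip_cong[of d "mv d Mm (u j)" "\<lambda>i. of_real c * u j i" f f] Mu[OF j] ip_scale_left_real by simp
    ultimately have "(e - of_real c) * ip d (u j) f = 0" by (simp add: algebra_simps)
    then show ?thesis using ne unfolding e_def by simp
  qed
  have Af: "mv d A f i = e * f i" if i: "i < d" for i
  proof -
    have "mv d Mm f i = mv d A f i - (\<Sum>l<k. \<alpha> l * u l i * ip d (u l) f)"
      unfolding Mm_def by (rule mv_rank[OF Ac i])
    then show ?thesis using orth Mf[OF i] by simp
  qed
  have "\<exists>i<d. v $ i \<noteq> 0"
  proof (rule ccontr)
    assume "\<not> ?thesis"
    then have "v = 0\<^sub>v d" using v by (intro eq_vecI) auto
    with v0 show False by simp
  qed
  then obtain i1 where i1: "i1 < d" "v $ i1 \<noteq> 0" by blast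
  have fpos: "0 < Re (ip d f f)" using ip_self_pos[of i1 d f] i1 unfolding f_def by simp
  have ereal: "e = of_real (Re e)"
  proof -
    have "ip d f (mv d A f) = ip d (mv d A f) f" by (rule ip_herm_move[OF A])
    moreover have "ip d f (mv d A f) = e * ip d f f"
      using ip_cong[of d f f "mv d A f" "\<lambda>i. e * f i"] Af ip_lin_right by simp
    moreover have "ip d (mv d A f) f = cnj e * ip d f f"
      using ip_cong[of d "mv d A f" "\<lambda>i. e * f i" f f] Af ip_lin_left by simp
    ultimately have "(e - cnj e) * ip d f f = 0" by (simp add: algebra_simps)
    then have "e = cnj e" using fpos by auto
    moreover have "Im (cnj e) = - Im e" by simp
    ultimately have "Im e = - Im e" by metis
    then have "Im e = 0" by linarith
    then show ?thesis by (simp add: complex_eq_iff)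
  qed
  define s where "s = complex_of_real (sqrt (Re (ip d f f)))"
  define w where "w = (\<lambda>i. f i / s)"
  have fne: "ip d f f \<noteq> 0" using fpos by auto
  have s0: "s \<noteq> 0" using fpos unfolding s_def by simp
  have "ip d w w = ip d f f / (s * s)"
    unfolding w_def ip_def s_def by (simp add: sum_divide_distrib)
  also have "s * s = ip d f f"
  proof -
    have "sqrt (Re (ip d f f)) * sqrt (Re (ip d f f)) = Re (ip d f f)" using fpos by simp
    then have "s * s = complex_of_real (Re (ip d f f))" unfolding s_def of_real_mult[symmetric] by simp
    then show ?thesis using ip_self_real[of d f] by simp
  qed
  finally have ww: "ip d w w = 1" using s0 fne by simp
  have wo: "\<forall>j<k. ip d (u j) w = 0" unfolding w_def using orth by (simp add: ip_scale_right)
  have wA: "\<forall>i<d. mv d A w i = of_real (Re e) * w i"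
  proof (intro allI impI)
    fix i assume i: "i < d"
    have "mv d A w i = e * f i / s" unfolding w_def mv_scale Af[OF i] by simp
    also have "\<dots> = of_real (Re e) * w i" unfolding w_def by (subst ereal) simp
    finally show "mv d A w i = of_real (Re e) * w i" .
  qed
  show ?thesis using ww wo wA by blast
qed

lemma spec_partial: assumes A: "hermd d A" shows "k \<le> d \<Longrightarrow> \<exists>u lam. orthonormal d k u \<and> eigen d A k u lam"
proof (induction k)
  case 0 then show ?case unfolding orthonormal_def eigen_def by auto
next
  case (Suc k)
  then obtain u lam where on: "orthonormal d k u" and ev: "eigen d A k u lam" by auto
  from spec_step[OF A _ on ev] Suc.prems obtain w e where
    ww: "ip d w w = 1" and wo: "\<forall>j<k. ip d (u j) w = 0" and wA: "\<forall>i<d. mv d A w i = of_real e * w i"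
    by auto
  define u' where "u' = u(k := w)"
  define lam' where "lam' = lam(k := e)"
  have "orthonormal d (Suc k) u'" unfolding orthonormal_def
  proof (intro allI impI)
    fix j l assume j: "j < Suc k" and l: "l < Suc k"
    show "ip d (u' j) (u' l) = of_bool (j = l)"
    proof (cases "j = k"; cases "l = k")
      assume "j \<noteq> k" "l = k" then show ?thesis using wo j unfolding u'_def by auto
    next
      assume "j = k" "l \<noteq> k" then show ?thesis using wo l ip_cnj[of d "u l" w] unfolding u'_def by auto
    next
      assume "j \<noteq> k" "l \<noteq> k" then show ?thesis using on j l unfolding u'_def orthonormal_def by auto
    qed (use ww u'_def in auto)
  qed
  moreover have "eigen d A (Suc k) u' lam'" unfolding eigen_def
  proof (intro allI impI)
    fix j i assume j: "j < Suc k" and i: "i < d"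
    show "mv d A (u' j) i = of_real (lam' j) * u' j i"
      using ev wA j i unfolding eigen_def u'_def lam'_def by (cases "j = k") auto
  qed
  ultimately show ?case by blast
qed

definition complete :: "nat \<Rightarrow> (nat \<Rightarrow> nat \<Rightarrow> complex) \<Rightarrow> bool" where
  "complete d u \<longleftrightarrow> (\<forall>a<d. \<forall>b<d. (\<Sum>k<d. u k a * cnj (u k b)) = of_bool (a = b))"

definition smat :: "nat \<Rightarrow> (nat \<Rightarrow> nat \<Rightarrow> complex) \<Rightarrow> (nat \<Rightarrow> real) \<Rightarrow> complex mat" where
  "smat d u lam = mat d d (\<lambda>(a,b). \<Sum>k<d. of_real (lam k) * u k a * cnj (u k b))"

lemma spectral: assumes A: "hermd d A"
  shows "\<exists>u lam. orthonormal d d u \<and> complete d u \<and> A = smat d u lam"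
proof -
  obtain u lam where on: "orthonormal d d u" and ev: "eigen d A d u lam"
    using spec_partial[OF A, of d] by auto
  have Ac: "A \<in> carrier_mat d d" using A hermd_carrier by blast
  define U where "U = mat d d (\<lambda>(a,k). u k a)"
  define V where "V = mat d d (\<lambda>(k,b). cnj (u k b))"
  have U: "U \<in> carrier_mat d d" and V: "V \<in> carrier_mat d d" unfolding U_def V_def by auto
  have "V * U = 1\<^sub>m d"
  proof (rule eq_matI)
    fix k l assume "k < dim_row (1\<^sub>m d)" "l < dim_col (1\<^sub>m d)"
    then have k: "k < d" and l: "l < d" by auto
    have "(V * U) $$ (k, l) = (\<Sum>m<d. V $$ (k, m) * U $$ (m, l))" by (rule mult_entry[OF V U k l])
    also have "\<dots> = ip d (u k) (u l)" unfolding ip_def V_def U_def using k l by (intro sum.cong) auto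
    finally have "(V * U) $$ (k, l) = ip d (u k) (u l)" .
    then show "(V * U) $$ (k, l) = 1\<^sub>m d $$ (k, l)" using on k l unfolding orthonormal_def by simp
  qed (use U V in auto)
  then have UV: "U * V = 1\<^sub>m d" by (rule mat_mult_left_right_inverse[OF V U])
  have comp: "complete d u" unfolding complete_def
  proof (intro allI impI)
    fix a b assume a: "a < d" and b: "b < d"
    have "(U * V) $$ (a, b) = (\<Sum>m<d. U $$ (a, m) * V $$ (m, b))" by (rule mult_entry[OF U V a b])
    also have "\<dots> = (\<Sum>k<d. u k a * cnj (u k b))" unfolding U_def V_def using a b by (intro sum.cong) auto
    finally have "(U * V) $$ (a, b) = (\<Sum>k<d. u k a * cnj (u k b))" .
    moreover have "(U * V) $$ (a, b) = of_bool (a = b)" using UV a b by simp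
    ultimately show "(\<Sum>k<d. u k a * cnj (u k b)) = of_bool (a = b)" by simp
  qed
  have "A = smat d u lam"
  proof (rule eq_matI)
    fix a b assume "a < dim_row (smat d u lam)" "b < dim_col (smat d u lam)"
    then have a: "a < d" and b: "b < d" by (auto simp: smat_def)
    have "A $$ (a, b) = (\<Sum>c<d. A $$ (a, c) * of_bool (c = b))"
      using b by (simp add: sum.delta)
    also have "\<dots> = (\<Sum>c<d. A $$ (a, c) * (\<Sum>k<d. u k c * cnj (u k b)))"
      using comp b unfolding complete_def by (intro sum.cong) auto
    also have "\<dots> = (\<Sum>c<d. \<Sum>k<d. A $$ (a, c) * u k c * cnj (u k b))"
      by (simp add: sum_distrib_left mult.assoc)
    also have "\<dots> = (\<Sum>k<d. \<Sum>c<d. A $$ (a, c) * u k c * cnj (u k b))"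
      by (rule sum.swap)
    also have "\<dots> = (\<Sum>k<d. (\<Sum>c<d. A $$ (a, c) * u k c) * cnj (u k b))"
      by (simp add: sum_distrib_right)
    also have "\<dots> = (\<Sum>k<d. of_real (lam k) * u k a * cnj (u k b))"
    proof (rule sum.cong[OF refl])
      fix k assume "k \<in> {..<d}"
      then have "mv d A (u k) a = of_real (lam k) * u k a" using ev a unfolding eigen_def by auto
      then show "(\<Sum>c<d. A $$ (a, c) * u k c) * cnj (u k b) = of_real (lam k) * u k a * cnj (u k b)"
        using a unfolding mv_def by simp
    qed
    finally show "A $$ (a, b) = smat d u lam $$ (a, b)" using a b by (simp add: smat_def)
  qed (use Ac in \<open>auto simp: smat_def\<close>)
  then show ?thesis using on comp by blast
qed

lemma adjoint_dims[simp]: "dim_row (mat_adjoint A) = dim_col A" "dim_col (mat_adjoint A) = dim_row A"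
  unfolding mat_adjoint_def by (simp_all add: mat_of_rows_def)

lemma adjoint_index: "i < dim_col A \<Longrightarrow> j < dim_row A \<Longrightarrow> mat_adjoint A $$ (i, j) = cnj (A $$ (j, i))"
  unfolding mat_adjoint_def by (simp add: mat_of_rows_index)

lemma hermd_iff_adjoint: "A \<in> carrier_mat d d \<Longrightarrow> hermd d A \<longleftrightarrow> mat_adjoint A = A"
proof
  assume A: "A \<in> carrier_mat d d" and h: "hermd d A"
  show "mat_adjoint A = A"
  proof (rule eq_matI)
    fix i j assume "i < dim_row A" "j < dim_col A"
    then have i: "i < d" and j: "j < d" using A by auto
    show "mat_adjoint A $$ (i, j) = A $$ (i, j)"
      using adjoint_index[of i A j] A i j hermdD[OF h j i] by simp
  qed (use A in auto)
next
  assume A: "A \<in> carrier_mat d d" and adj: "mat_adjoint A = A"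
  show "hermd d A" unfolding hermd_def
  proof (intro conjI allI impI)
    fix i j assume i: "i < d" and j: "j < d"
    have "mat_adjoint A $$ (j, i) = cnj (A $$ (i, j))" using adjoint_index[of j A i] A i j by simp
    then show "A $$ (j, i) = cnj (A $$ (i, j))" using adj by simp
  qed (rule A)
qed

lemma psd_iff: "psd d B \<longleftrightarrow> hermd d B \<and> (\<forall>x. 0 \<le> Re (ip d x (mv d B x)))"
proof
  assume p: "psd d B"
  then have B: "B \<in> carrier_mat d d" and adj: "mat_adjoint B = B" unfolding psd_def by auto
  have h: "hermd d B" using hermd_iff_adjoint[OF B] adj by simp
  have "0 \<le> Re (ip d x (mv d B x))" for x
  proof -
    have "vec d x \<in> carrier_vec d" by simp
    then have "0 \<le> Re (\<Sum>i<d. cnj (vec d x $ i) * (B *\<^sub>v vec d x) $ i)" using p unfolding psd_def by blast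
    also have "(\<Sum>i<d. cnj (vec d x $ i) * (B *\<^sub>v vec d x) $ i) = ip d x (mv d B x)"
      unfolding ip_def using mv_vec[OF B, of "vec d x"] by (intro sum.cong) (auto simp: mv_def)
    finally show ?thesis .
  qed
  then show "hermd d B \<and> (\<forall>x. 0 \<le> Re (ip d x (mv d B x)))" using h by blast
next
  assume a: "hermd d B \<and> (\<forall>x. 0 \<le> Re (ip d x (mv d B x)))"
  then have B: "B \<in> carrier_mat d d" using hermd_carrier by blast
  have "0 \<le> Re (\<Sum>i<d. cnj (v $ i) * (B *\<^sub>v v) $ i)" if v: "v \<in> carrier_vec d" for v
  proof -
    have "(\<Sum>i<d. cnj (v $ i) * (B *\<^sub>v v) $ i) = ip d (\<lambda>j. v $ j) (mv d B (\<lambda>j. v $ j))"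
      unfolding ip_def using mv_vec[OF B v] by (intro sum.cong) auto
    then show ?thesis using a by simp
  qed
  then show "psd d B" unfolding psd_def using B a hermd_iff_adjoint[OF B] by blast
qed

lemma smat_carrier[simp]: "smat d u lam \<in> carrier_mat d d"
  unfolding smat_def by simp

lemma smat_dims[simp]: "dim_row (smat d u lam) = d" "dim_col (smat d u lam) = d"
  unfolding smat_def by simp_all

lemma smat_index: "a < d \<Longrightarrow> b < d \<Longrightarrow> smat d u lam $$ (a, b) = (\<Sum>k<d. of_real (lam k) * u k a * cnj (u k b))"
  unfolding smat_def by simp

lemma smat_herm: "hermd d (smat d u lam)"
  unfolding hermd_def by (auto simp: smat_index cnj_sum ac_simps)

lemma smat_mv: assumes "i < d"
  shows "mv d (smat d u lam) x i = (\<Sum>k<d. of_real (lam k) * u k i * ip d (u k) x)"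
proof -
  have "mv d (smat d u lam) x i = (\<Sum>j<d. \<Sum>k<d. of_real (lam k) * u k i * cnj (u k j) * x j)"
    unfolding mv_def using assms by (simp add: smat_index sum_distrib_right)
  also have "\<dots> = (\<Sum>k<d. \<Sum>j<d. of_real (lam k) * u k i * cnj (u k j) * x j)" by (rule sum.swap)
  also have "\<dots> = (\<Sum>k<d. of_real (lam k) * u k i * ip d (u k) x)"
    unfolding ip_def by (simp add: sum_distrib_left mult.assoc)
  finally show ?thesis .
qed

lemma smat_qf: "ip d x (mv d (smat d u lam) x) = (\<Sum>k<d. of_real (lam k) * cnj (ip d (u k) x) * ip d (u k) x)"
proof -
  have "ip d x (mv d (smat d u lam) x) = (\<Sum>i<d. cnj (x i) * mv d (smat d u lam) x i)"
    by (simp only: ip_def)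
  also have "\<dots> = (\<Sum>i<d. \<Sum>k<d. cnj (x i) * (of_real (lam k) * u k i * ip d (u k) x))"
    by (intro sum.cong refl) (simp add: smat_mv sum_distrib_left)
  also have "\<dots> = (\<Sum>k<d. \<Sum>i<d. cnj (x i) * (of_real (lam k) * u k i * ip d (u k) x))" by (rule sum.swap)
  also have "\<dots> = (\<Sum>k<d. of_real (lam k) * cnj (ip d (u k) x) * ip d (u k) x)"
  proof (rule sum.cong[OF refl])
    fix k
    have "cnj (ip d (u k) x) = (\<Sum>i<d. cnj (x i) * u k i)" unfolding ip_def by (simp add: cnj_sum mult.commute)
    then show "(\<Sum>i<d. cnj (x i) * (of_real (lam k) * u k i * ip d (u k) x)) = of_real (lam k) * cnj (ip d (u k) x) * ip d (u k) x"
      by (simp add: sum_distrib_left sum_distrib_right ac_simps)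
  qed
  finally show ?thesis .
qed

lemma smat_qf_Re: "Re (ip d x (mv d (smat d u lam) x)) = (\<Sum>k<d. lam k * (cmod (ip d (u k) x))^2)"
proof -
  have "\<And>z. cnj z * z = complex_of_real ((cmod z)^2)" by (subst complex_norm_square) (rule mult.commute)
  then show ?thesis unfolding smat_qf by (simp add: Re_sum mult.assoc)
qed

lemma smat_mult: assumes on: "orthonormal d d u"
  shows "smat d u l1 * smat d u l2 = smat d u (\<lambda>k. l1 k * l2 k)"
proof (rule eq_matI)
  fix a b assume "a < dim_row (smat d u (\<lambda>k. l1 k * l2 k))" "b < dim_col (smat d u (\<lambda>k. l1 k * l2 k))"
  then have a: "a < d" and b: "b < d" by auto
  have "(smat d u l1 * smat d u l2) $$ (a, b) = (\<Sum>c<d. smat d u l1 $$ (a, c) * smat d u l2 $$ (c, b))"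
    by (rule mult_entry[OF smat_carrier smat_carrier a b])
  also have "\<dots> = (\<Sum>c<d. \<Sum>k<d. \<Sum>m<d. (of_real (l1 k) * u k a * of_real (l2 m) * cnj (u m b)) * (cnj (u k c) * u m c))"
    using a b by (intro sum.cong refl) (simp add: smat_index sum_product ac_simps)
  also have "\<dots> = (\<Sum>k<d. \<Sum>c<d. \<Sum>m<d. (of_real (l1 k) * u k a * of_real (l2 m) * cnj (u m b)) * (cnj (u k c) * u m c))"
    by (rule sum.swap)
  also have "\<dots> = (\<Sum>k<d. \<Sum>m<d. \<Sum>c<d. (of_real (l1 k) * u k a * of_real (l2 m) * cnj (u m b)) * (cnj (u k c) * u m c))"
    by (intro sum.cong refl sum.swap)
  also have "\<dots> = (\<Sum>k<d. \<Sum>m<d. (of_real (l1 k) * u k a * of_real (l2 m) * cnj (u m b)) * ip d (u k) (u m))"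
    unfolding ip_def by (simp add: sum_distrib_left)
  also have "\<dots> = (\<Sum>k<d. \<Sum>m<d. if m = k then of_real (l1 k) * u k a * of_real (l2 k) * cnj (u k b) else 0)"
    using on unfolding orthonormal_def by (intro sum.cong) auto
  also have "\<dots> = (\<Sum>k<d. of_real (l1 k * l2 k) * u k a * cnj (u k b))"
    by (intro sum.cong) (auto simp: sum.delta)
  finally show "(smat d u l1 * smat d u l2) $$ (a, b) = smat d u (\<lambda>k. l1 k * l2 k) $$ (a, b)"
    using a b by (simp add: smat_index)
qed auto

lemma smat_trace: assumes on: "orthonormal d d u" shows "mtrace (smat d u lam) = of_real (\<Sum>k<d. lam k)"
proof -
  have "mtrace (smat d u lam) = (\<Sum>a<d. \<Sum>k<d. of_real (lam k) * u k a * cnj (u k a))"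
    unfolding mtrace_def by (simp add: smat_index)
  also have "\<dots> = (\<Sum>k<d. \<Sum>a<d. of_real (lam k) * (cnj (u k a) * u k a))"
    by (subst sum.swap) (simp add: ac_simps)
  also have "\<dots> = (\<Sum>k<d. of_real (lam k) * ip d (u k) (u k))"
    unfolding ip_def by (simp add: sum_distrib_left)
  also have "\<dots> = (\<Sum>k<d. of_real (lam k))" using on unfolding orthonormal_def by simp
  finally show ?thesis by simp
qed

lemma smat_eigen: assumes on: "orthonormal d d u" and j: "j < d" and i: "i < d"
  shows "mv d (smat d u lam) (u j) i = of_real (lam j) * u j i"
proof -
  have "mv d (smat d u lam) (u j) i = (\<Sum>k<d. if k = j then of_real (lam j) * u j i else 0)"
    unfolding smat_mv[OF i] using on j unfolding orthonormal_def by (intro sum.cong) auto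
  then show ?thesis using j by (simp add: sum.delta)
qed

lemma psd_spec: assumes p: "psd d B"
  shows "\<exists>u \<beta>. orthonormal d d u \<and> complete d u \<and> B = smat d u \<beta> \<and> (\<forall>k<d. 0 \<le> \<beta> k)"
proof -
  have h: "hermd d B" and q: "\<And>x. 0 \<le> Re (ip d x (mv d B x))" using p psd_iff by auto
  obtain u \<beta> where on: "orthonormal d d u" and co: "complete d u" and Bs: "B = smat d u \<beta>"
    using spectral[OF h] by blast
  have "0 \<le> \<beta> k" if k: "k < d" for k
  proof -
    have "ip d (u k) (mv d B (u k)) = ip d (u k) (\<lambda>i. of_real (\<beta> k) * u k i)"
      using smat_eigen[OF on k] Bs by (intro ip_cong) auto
    also have "\<dots> = of_real (\<beta> k)" using on k unfolding ip_lin_right orthonormal_def by simp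
    finally show ?thesis using q[of "u k"] by simp
  qed
  then show ?thesis using on co Bs by blast
qed

lemma psd_kernel: assumes p: "psd d B" and z: "Re (ip d x (mv d B x)) = 0" and i: "i < d"
  shows "mv d B x i = 0"
proof -
  obtain u \<beta> where on: "orthonormal d d u" and Bs: "B = smat d u \<beta>" and nn: "\<forall>k<d. 0 \<le> \<beta> k"
    using psd_spec[OF p] by blast
  have "(\<Sum>k<d. \<beta> k * (cmod (ip d (u k) x))^2) = 0" using z smat_qf_Re Bs by simp
  then have "\<forall>k\<in>{..<d}. \<beta> k * (cmod (ip d (u k) x))^2 = 0"
    by (subst sum_nonneg_eq_0_iff[symmetric]) (use nn in auto)
  then have "\<forall>k<d. of_real (\<beta> k) * ip d (u k) x = 0" by auto
  then show ?thesis unfolding Bs smat_mv[OF i] by (intro sum.neutral) (auto simp: ac_simps)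
qed

lemma mv_minus: assumes "A \<in> carrier_mat d d" "B \<in> carrier_mat d d"
  shows "mv d (A - B) x i = mv d A x i - mv d B x i"
  using assms unfolding mv_def by (auto simp: algebra_simps sum_subtractf)

lemma ip_add_right: "ip d x (\<lambda>i. y i + z i) = ip d x y + ip d x z"
  unfolding ip_def by (simp add: algebra_simps sum.distrib)

lemma ip_diff_sum: "ip d (\<lambda>i. y i - z i) (\<lambda>i. y i + z i) = ip d y y - ip d z z + (ip d y z - ip d z y)"
  unfolding ip_def by (simp add: algebra_simps sum.distrib sum_subtractf)

lemma sqrt_unique: assumes pB: "psd d B" and pC: "psd d C" and sq: "B * B = C * C"
  shows "B = C"
proof -
  have hB: "hermd d B" and qB: "\<And>x. 0 \<le> Re (ip d x (mv d B x))" using pB psd_iff by auto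
  have hC: "hermd d C" and qC: "\<And>x. 0 \<le> Re (ip d x (mv d C x))" using pC psd_iff by auto
  have Bc: "B \<in> carrier_mat d d" and Cc: "C \<in> carrier_mat d d" using hB hC hermd_carrier by auto
  define D where "D = B - C"
  have Dc: "D \<in> carrier_mat d d" unfolding D_def using Bc Cc by auto
  have hD: "hermd d D" unfolding hermd_def
  proof (intro conjI allI impI)
    fix i j assume i: "i < d" and j: "j < d"
    show "D $$ (j, i) = cnj (D $$ (i, j))"
      unfolding D_def using Bc Cc i j hermdD[OF hB i j] hermdD[OF hC i j] by simp
  qed (rule Dc)
  obtain w \<mu> where on: "orthonormal d d w" and Ds: "D = smat d w \<mu>" using spectral[OF hD] by blast
  have \<mu>0: "\<mu> k = 0" if k: "k < d" for k
  proof (rule ccontr)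
    assume ne: "\<mu> k \<noteq> 0"
    define x where "x = w k"
    define y where "y = mv d B x"
    define z where "z = mv d C x"
    have e1: "y i - z i = of_real (\<mu> k) * x i" if i: "i < d" for i
      using mv_minus[OF Bc Cc, of x i] smat_eigen[OF on k i, of \<mu>] Ds
      unfolding y_def z_def x_def D_def by simp
    have yy: "ip d y y = ip d x (mv d (B * B) x)"
      unfolding y_def mv_mult[OF Bc Bc] using ip_herm_move[OF hB, of x "mv d B x"] by simp
    have zz: "ip d z z = ip d x (mv d (C * C) x)"
      unfolding z_def mv_mult[OF Cc Cc] using ip_herm_move[OF hC, of x "mv d C x"] by simp
    have "ip d z y = cnj (ip d y z)" using ip_cnj[of d y z] by simp
    then have "Re (ip d z y) = Re (ip d y z)" by simp
    then have "Re (ip d (\<lambda>i. y i - z i) (\<lambda>i. y i + z i)) = 0"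
      unfolding ip_diff_sum using yy zz sq by simp
    moreover have "ip d (\<lambda>i. y i - z i) (\<lambda>i. y i + z i) = of_real (\<mu> k) * (ip d x y + ip d x z)"
    proof -
      have "ip d (\<lambda>i. y i - z i) (\<lambda>i. y i + z i) = ip d (\<lambda>i. of_real (\<mu> k) * x i) (\<lambda>i. y i + z i)"
        using e1 by (intro ip_cong) auto
      then show ?thesis unfolding ip_scale_left_real ip_add_right .
    qed
    ultimately have "\<mu> k * (Re (ip d x y) + Re (ip d x z)) = 0" by simp
    then have s0: "Re (ip d x y) + Re (ip d x z) = 0" using ne by simp
    have "Re (ip d x y) = 0" "Re (ip d x z) = 0"
      using s0 qB[of x] qC[of x] unfolding y_def z_def by linarith+
    then have "\<forall>i<d. y i = 0 \<and> z i = 0"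
      using psd_kernel[OF pB] psd_kernel[OF pC] unfolding y_def z_def by blast
    then have "\<forall>i<d. x i = 0" using e1 ne by (metis diff_zero mult_eq_0_iff of_real_eq_0_iff)
    then have "ip d x x = 0" unfolding ip_def by simp
    moreover have "ip d x x = 1" using on k unfolding x_def orthonormal_def by simp
    ultimately show False by simp
  qed
  show ?thesis
  proof (rule eq_matI)
    fix a b assume "a < dim_row C" "b < dim_col C"
    then have a: "a < d" and b: "b < d" using Cc by auto
    have "D $$ (a, b) = 0" unfolding Ds smat_index[OF a b] using \<mu>0 by simp
    then show "B $$ (a, b) = C $$ (a, b)" unfolding D_def using Bc Cc a b by simp
  qed (use Bc Cc in auto)
qed

lemma trace_norm_herm: assumes h: "hermd d \<Delta>" and on: "orthonormal d d u" and Ds: "\<Delta> = smat d u t"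
  shows "trace_norm \<Delta> = (\<Sum>k<d. \<bar>t k\<bar>)"
proof -
  have Dc: "\<Delta> \<in> carrier_mat d d" using h hermd_carrier by blast
  define B0 where "B0 = smat d u (\<lambda>k. \<bar>t k\<bar>)"
  have adj: "mat_adjoint \<Delta> = \<Delta>" using hermd_iff_adjoint[OF Dc] h by simp
  have "mat_adjoint \<Delta> * \<Delta> = \<Delta> * \<Delta>" using adj by simp
  also have "\<dots> = smat d u (\<lambda>k. t k * t k)" unfolding Ds by (rule smat_mult[OF on])
  finally have AA: "mat_adjoint \<Delta> * \<Delta> = smat d u (\<lambda>k. t k * t k)" .
  have "B0 * B0 = smat d u (\<lambda>k. \<bar>t k\<bar> * \<bar>t k\<bar>)" unfolding B0_def by (rule smat_mult[OF on])
  also have "(\<lambda>k. \<bar>t k\<bar> * \<bar>t k\<bar>) = (\<lambda>k. t k * t k)" by (simp add: abs_mult_self_eq)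
  finally have B0sq: "B0 * B0 = mat_adjoint \<Delta> * \<Delta>" using AA by simp
  have pB0: "psd d B0" unfolding psd_iff B0_def smat_qf_Re
    by (auto simp: smat_herm intro!: sum_nonneg)
  have dr: "dim_row (mat_adjoint \<Delta> * \<Delta>) = d" using Dc by simp
  have "psd_sqrt (mat_adjoint \<Delta> * \<Delta>) = B0"
    unfolding psd_sqrt_def dr
  proof (rule the_equality)
    show "psd d B0 \<and> B0 * B0 = mat_adjoint \<Delta> * \<Delta>" using pB0 B0sq by simp
  next
    fix B assume "psd d B \<and> B * B = mat_adjoint \<Delta> * \<Delta>"
    then show "B = B0" using sqrt_unique[OF _ pB0] B0sq by auto
  qed
  then show ?thesis unfolding trace_norm_def B0_def using smat_trace[OF on, of "\<lambda>k. \<bar>t k\<bar>"] by simp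
qed

lemma sum_split: fixes N :: nat and g :: "nat \<Rightarrow> 'a::comm_monoid_add"
  shows "(\<Sum>s<N*N. g s) = (\<Sum>i<N. \<Sum>j<N. g (i*N + j))"
proof -
  have "(\<Sum>s<N*N. g s) = (\<Sum>i<N. sum g {i*N..<i*N+N})" using sum.nat_group[of g N N] by simp
  also have "\<dots> = (\<Sum>i<N. \<Sum>j<N. g (i*N + j))"
  proof (rule sum.cong[OF refl])
    fix i
    have "sum g {0 + i*N..<N + i*N} = (\<Sum>j = 0..<N. g (j + i*N))" by (rule sum.shift_bounds_nat_ivl)
    then show "sum g {i*N..<i*N+N} = (\<Sum>j<N. g (i*N + j))" by (simp add: atLeast0LessThan add.commute)
  qed
  finally show ?thesis .
qed

lemma sum_split2: assumes "0 < (N::nat)"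
  shows "(\<Sum>s<N*N. f (s div N) (s mod N)) = (\<Sum>i<N. \<Sum>j<N. f i j)"
  unfolding sum_split using assms by (intro sum.cong refl) auto

definition qP :: "nat \<Rightarrow> (nat \<Rightarrow> complex) \<Rightarrow> complex" where
  "qP n x = ip (2^n*2^n) x (mv (2^n*2^n) (PiAll n) x)"

definition Gf :: "nat \<Rightarrow> complex mat \<Rightarrow> complex mat \<Rightarrow> complex" where
  "Gf n X Y = (\<Sum>r<2^n*2^n. \<Sum>s<2^n*2^n. PiAll n $$ (r, s) * (X $$ (s div 2^n, r div 2^n) * Y $$ (s mod 2^n, r mod 2^n)))"

lemma PiAll_carrier: "PiAll n \<in> carrier_mat (2^n*2^n) (2^n*2^n)"
  using PiAll_props hermd_carrier by blast

lemma PiAll_dims[simp]: "dim_row (PiAll n) = 2^n*2^n" "dim_col (PiAll n) = 2^n*2^n"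
  using PiAll_carrier[of n] by auto

lemma kron_carrier: "X \<in> carrier_mat N N \<Longrightarrow> Y \<in> carrier_mat N N \<Longrightarrow> kron X Y \<in> carrier_mat (N*N) (N*N)"
  unfolding kron_def by auto

lemma kron_index: "X \<in> carrier_mat N N \<Longrightarrow> Y \<in> carrier_mat N N \<Longrightarrow> s < N*N \<Longrightarrow> r < N*N \<Longrightarrow>
  kron X Y $$ (s, r) = X $$ (s div N, r div N) * Y $$ (s mod N, r mod N)"
  unfolding kron_def by auto

lemma trace_Gf: assumes X: "X \<in> carrier_mat (2^n) (2^n)" and Y: "Y \<in> carrier_mat (2^n) (2^n)"
  shows "mtrace (PiAll n * kron X Y) = Gf n X Y"
proof -
  have K: "kron X Y \<in> carrier_mat (2^n*2^n) (2^n*2^n)" by (rule kron_carrier[OF X Y])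
  have "mtrace (PiAll n * kron X Y) = (\<Sum>r<2^n*2^n. (PiAll n * kron X Y) $$ (r, r))"
    unfolding mtrace_def using PiAll_carrier K by simp
  also have "\<dots> = Gf n X Y" unfolding Gf_def
  proof (rule sum.cong[OF refl])
    fix r :: nat assume "r \<in> {..<2^n*2^n}"
    then have r: "r < 2^n*2^n" by simp
    show "(PiAll n * kron X Y) $$ (r, r) = (\<Sum>s<2^n*2^n. PiAll n $$ (r, s) * (X $$ (s div 2^n, r div 2^n) * Y $$ (s mod 2^n, r mod 2^n)))"
      unfolding mult_entry[OF PiAll_carrier K r r] using kron_index[OF X Y _ r] by (intro sum.cong) auto
  qed
  finally show ?thesis .
qed

lemma Gf_split: assumes R: "R \<in> carrier_mat (2^n) (2^n)" and S: "S \<in> carrier_mat (2^n) (2^n)"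
  shows "Gf n R R - Gf n S S = Gf n R (R - S) + Gf n (R - S) S"
proof -
  let ?N = "2^n :: nat"
  have dm: "s div ?N < ?N" "r div ?N < ?N" if "s < ?N * ?N" "r < ?N * ?N" for s r
    using that by (simp_all add: less_mult_imp_div_less)
  show ?thesis unfolding Gf_def sum_subtractf[symmetric] sum.distrib[symmetric]
    using R S dm by (intro sum.cong refl) (auto simp: algebra_simps)
qed

lemma qP_expand: "qP n x = (\<Sum>r<2^n*2^n. \<Sum>s<2^n*2^n. cnj (x r) * PiAll n $$ (r, s) * x s)"
  unfolding qP_def ip_def mv_def by (simp add: sum_distrib_left mult.assoc)

lemma sum_swap4: "(\<Sum>r\<in>A. \<Sum>s\<in>B. \<Sum>m\<in>C. \<Sum>k\<in>D. f r s m k) = (\<Sum>m\<in>C. \<Sum>k\<in>D. \<Sum>r\<in>A. \<Sum>s\<in>B. f r s m k)"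
proof -
  have "(\<Sum>r\<in>A. \<Sum>s\<in>B. \<Sum>m\<in>C. \<Sum>k\<in>D. f r s m k) = (\<Sum>r\<in>A. \<Sum>m\<in>C. \<Sum>s\<in>B. \<Sum>k\<in>D. f r s m k)"
    by (intro sum.cong refl sum.swap)
  also have "\<dots> = (\<Sum>m\<in>C. \<Sum>r\<in>A. \<Sum>s\<in>B. \<Sum>k\<in>D. f r s m k)" by (rule sum.swap)
  also have "\<dots> = (\<Sum>m\<in>C. \<Sum>r\<in>A. \<Sum>k\<in>D. \<Sum>s\<in>B. f r s m k)"
    by (intro sum.cong refl sum.swap)
  also have "\<dots> = (\<Sum>m\<in>C. \<Sum>k\<in>D. \<Sum>r\<in>A. \<Sum>s\<in>B. f r s m k)"
    by (intro sum.cong refl sum.swap)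
  finally show ?thesis .
qed

lemma Gf_smat:
  "Gf n (smat (2^n) a \<alpha>) (smat (2^n) b \<beta>) = (\<Sum>m<2^n. \<Sum>k<2^n. of_real (\<alpha> m) * of_real (\<beta> k) *
      qP n (\<lambda>s. a m (s div 2^n) * b k (s mod 2^n)))"
proof -
  let ?N = "2^n :: nat"
  let ?M = "2^n * 2^n :: nat"
  let ?P = "PiAll n"
  define x where "x = (\<lambda>m k s. a m (s div ?N) * b k (s mod ?N))"
  have dm: "s div ?N < ?N" if "s < ?M" for s using that by (simp add: less_mult_imp_div_less)
  have "Gf n (smat ?N a \<alpha>) (smat ?N b \<beta>) =
     (\<Sum>r<?M. \<Sum>s<?M. \<Sum>m<?N. \<Sum>k<?N. of_real (\<alpha> m) * of_real (\<beta> k) * (cnj (x m k r) * ?P $$ (r, s) * x m k s))"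
    unfolding Gf_def
  proof (intro sum.cong refl)
    fix r s assume r: "r \<in> {..<?M}" and s: "s \<in> {..<?M}"
    then have i: "r div ?N < ?N" "s div ?N < ?N" "r mod ?N < ?N" "s mod ?N < ?N" using dm by auto
    show "?P $$ (r, s) * (smat ?N a \<alpha> $$ (s div ?N, r div ?N) * smat ?N b \<beta> $$ (s mod ?N, r mod ?N)) =
       (\<Sum>m<?N. \<Sum>k<?N. of_real (\<alpha> m) * of_real (\<beta> k) * (cnj (x m k r) * ?P $$ (r, s) * x m k s))"
      unfolding smat_index[OF i(2) i(1)] smat_index[OF i(4) i(3)] x_def
      by (simp add: sum_product sum_distrib_left ac_simps) (rule sum.swap)
  qed
  also have "\<dots> = (\<Sum>m<?N. \<Sum>k<?N. \<Sum>r<?M. \<Sum>s<?M. of_real (\<alpha> m) * of_real (\<beta> k) * (cnj (x m k r) * ?P $$ (r, s) * x m k s))"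
    by (rule sum_swap4)
  also have "\<dots> = (\<Sum>m<?N. \<Sum>k<?N. of_real (\<alpha> m) * of_real (\<beta> k) * qP n (x m k))"
    unfolding qP_expand by (simp add: sum_distrib_left)
  finally show ?thesis unfolding x_def .
qed

lemma ip_prod: "ip (2^n*2^n) (\<lambda>s. a (s div 2^n) * b (s mod 2^n)) (\<lambda>s. a (s div 2^n) * b (s mod 2^n))
   = ip (2^n) a a * ip (2^n) b b"
proof -
  have "ip (2^n*2^n) (\<lambda>s. a (s div 2^n) * b (s mod 2^n)) (\<lambda>s. a (s div 2^n) * b (s mod 2^n))
      = (\<Sum>i<2^n. \<Sum>j<2^n. cnj (a i * b j) * (a i * b j))"
    unfolding ip_def by (rule sum_split2[of "2^n" "\<lambda>i j. cnj (a i * b j) * (a i * b j)"]) simp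
  also have "\<dots> = ip (2^n) a a * ip (2^n) b b"
    unfolding ip_def by (simp add: sum_product ac_simps)
  finally show ?thesis .
qed

lemma qP_bounds: assumes "ip (2^n) a a = 1" "ip (2^n) b b = 1"
  shows "0 \<le> Re (qP n (\<lambda>s. a (s div 2^n) * b (s mod 2^n))) \<and> Re (qP n (\<lambda>s. a (s div 2^n) * b (s mod 2^n))) \<le> 1"
  using PiAll_bounds[of n "\<lambda>s. a (s div 2^n) * b (s mod 2^n)"] ip_prod[of n a b] assms
  unfolding qP_def by simp

lemma wbound:
  fixes p t :: "nat \<Rightarrow> real" and r :: "nat \<Rightarrow> nat \<Rightarrow> real"
  assumes p0: "\<forall>m<N. 0 \<le> p m" and p1: "(\<Sum>m<N. p m) = 1" and t0: "(\<Sum>k<N. t k) = 0"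
    and rb: "\<forall>k<N. \<forall>m<N. 0 \<le> r k m \<and> r k m \<le> 1"
  shows "\<bar>\<Sum>k<N. t k * (\<Sum>m<N. p m * r k m)\<bar> \<le> (\<Sum>k<N. \<bar>t k\<bar>) / 2"
proof -
  define c where "c = (\<lambda>k. \<Sum>m<N. p m * r k m)"
  have cb: "0 \<le> c k \<and> c k \<le> 1" if k: "k < N" for k
  proof
    show "0 \<le> c k" unfolding c_def using p0 rb k by (intro sum_nonneg) auto
    have "c k \<le> (\<Sum>m<N. p m)" unfolding c_def
      using p0 rb k by (intro sum_mono) (simp add: mult_left_le)
    then show "c k \<le> 1" using p1 by simp
  qed
  have "(\<Sum>k<N. t k * c k) = (\<Sum>k<N. t k * (c k - 1/2))"
    using t0 by (simp add: algebra_simps sum_subtractf sum_divide_distrib[symmetric])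
  also have "\<bar>\<dots>\<bar> \<le> (\<Sum>k<N. \<bar>t k * (c k - 1/2)\<bar>)" by (rule sum_abs)
  also have "\<dots> \<le> (\<Sum>k<N. \<bar>t k\<bar> / 2)"
  proof (rule sum_mono)
    fix k assume "k \<in> {..<N}"
    then have "0 \<le> c k" "c k \<le> 1" using cb by auto
    then have h: "\<bar>c k - 1/2\<bar> \<le> 1/2" by (auto simp: abs_if)
    have "\<bar>t k * (c k - 1/2)\<bar> = \<bar>t k\<bar> * \<bar>c k - 1/2\<bar>" by (rule abs_mult)
    also have "\<dots> \<le> \<bar>t k\<bar> * (1/2)" by (rule mult_left_mono[OF h]) simp
    finally show "\<bar>t k * (c k - 1/2)\<bar> \<le> \<bar>t k\<bar> / 2" by simp
  qed
  also have "\<dots> = (\<Sum>k<N. \<bar>t k\<bar>) / 2" by (simp add: sum_divide_distrib)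
  finally show ?thesis unfolding c_def .
qed

lemma Re_Gf_smat:
  "Re (Gf n (smat (2^n) a \<alpha>) (smat (2^n) b \<beta>)) = (\<Sum>m<2^n. \<Sum>k<2^n. \<alpha> m * \<beta> k *
      Re (qP n (\<lambda>s. a m (s div 2^n) * b k (s mod 2^n))))"
  unfolding Gf_smat by (simp add: Re_sum)

lemma herm_minus: "hermd d A \<Longrightarrow> hermd d B \<Longrightarrow> hermd d (A - B)"
proof -
  assume hA: "hermd d A" and hB: "hermd d B"
  have Ac: "A \<in> carrier_mat d d" and Bc: "B \<in> carrier_mat d d" using hA hB hermd_carrier by auto
  show "hermd d (A - B)" unfolding hermd_def
  proof (intro conjI allI impI)
    fix i j assume i: "i < d" and j: "j < d"
    show "(A - B) $$ (j, i) = cnj ((A - B) $$ (i, j))"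
      using Ac Bc i j hermdD[OF hA i j] hermdD[OF hB i j] by simp
  qed (use Ac Bc in auto)
qed

theorem mainTheorem18:
  fixes n :: nat and \<rho> \<sigma> :: "complex mat"
  assumes "density n \<rho>" and "density n \<sigma>"
  shows "\<bar>Cmeas n \<rho> - Cmeas n \<sigma>\<bar> \<le> trace_norm (\<rho> - \<sigma>)"
proof -
  let ?N = "2^n :: nat"
  have pr: "psd ?N \<rho>" and trr: "mtrace \<rho> = 1" using assms(1) unfolding density_def by auto
  have ps: "psd ?N \<sigma>" and trs: "mtrace \<sigma> = 1" using assms(2) unfolding density_def by auto
  have hr: "hermd ?N \<rho>" and hs: "hermd ?N \<sigma>" using pr ps psd_iff by auto
  have rc: "\<rho> \<in> carrier_mat ?N ?N" and sc: "\<sigma> \<in> carrier_mat ?N ?N" using hr hs hermd_carrier by auto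
  obtain w p where onw: "orthonormal ?N ?N w" and rs: "\<rho> = smat ?N w p" and p0: "\<forall>k<?N. 0 \<le> p k"
    using psd_spec[OF pr] by blast
  obtain w' p' where onw': "orthonormal ?N ?N w'" and ss: "\<sigma> = smat ?N w' p'" and p0': "\<forall>k<?N. 0 \<le> p' k"
    using psd_spec[OF ps] by blast
  have "complex_of_real (\<Sum>k<?N. p k) = 1" using smat_trace[OF onw, of p] rs trr by metis
  then have p1: "(\<Sum>k<?N. p k) = 1" by (simp only: of_real_eq_1_iff)
  have "complex_of_real (\<Sum>k<?N. p' k) = 1" using smat_trace[OF onw', of p'] ss trs by metis
  then have p1': "(\<Sum>k<?N. p' k) = 1" by (simp only: of_real_eq_1_iff)
  define \<Delta> where "\<Delta> = \<rho> - \<sigma>"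
  have hD: "hermd ?N \<Delta>" unfolding \<Delta>_def by (rule herm_minus[OF hr hs])
  obtain u t where onu: "orthonormal ?N ?N u" and Ds: "\<Delta> = smat ?N u t" using spectral[OF hD] by blast
  have "mtrace \<Delta> = mtrace \<rho> - mtrace \<sigma>" unfolding mtrace_def \<Delta>_def using rc sc by (simp add: sum_subtractf)
  then have "complex_of_real (\<Sum>k<?N. t k) = 0" using smat_trace[OF onu, of t] Ds trr trs by simp
  then have t0: "(\<Sum>k<?N. t k) = 0" by (simp only: of_real_eq_0_iff)
  have tn: "trace_norm \<Delta> = (\<Sum>k<?N. \<bar>t k\<bar>)" by (rule trace_norm_herm[OF hD onu Ds])
  have C: "Cmeas n \<rho> - Cmeas n \<sigma> = - (Re (Gf n \<rho> \<Delta>) + Re (Gf n \<Delta> \<sigma>))"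
  proof -
    have "Gf n \<rho> \<rho> - Gf n \<sigma> \<sigma> = Gf n \<rho> \<Delta> + Gf n \<Delta> \<sigma>" unfolding \<Delta>_def by (rule Gf_split[OF rc sc])
    then have "Re (Gf n \<rho> \<rho>) - Re (Gf n \<sigma> \<sigma>) = Re (Gf n \<rho> \<Delta>) + Re (Gf n \<Delta> \<sigma>)"
      by (metis minus_complex.sel(1) plus_complex.sel(1))
    then show ?thesis unfolding Cmeas_def trace_Gf[OF rc rc] trace_Gf[OF sc sc] by simp
  qed
  have nw: "\<And>m. m < ?N \<Longrightarrow> ip ?N (w m) (w m) = 1" using onw unfolding orthonormal_def by simp
  have nw': "\<And>m. m < ?N \<Longrightarrow> ip ?N (w' m) (w' m) = 1" using onw' unfolding orthonormal_def by simp
  have nu: "\<And>m. m < ?N \<Longrightarrow> ip ?N (u m) (u m) = 1" using onu unfolding orthonormal_def by simp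
  have b1: "\<bar>Re (Gf n \<rho> \<Delta>)\<bar> \<le> (\<Sum>k<?N. \<bar>t k\<bar>) / 2"
  proof -
    define R where "R = (\<lambda>k m. Re (qP n (\<lambda>s. w m (s div ?N) * u k (s mod ?N))))"
    have "Re (Gf n \<rho> \<Delta>) = (\<Sum>m<?N. \<Sum>k<?N. p m * t k * R k m)"
      unfolding rs Ds Re_Gf_smat R_def ..
    also have "\<dots> = (\<Sum>k<?N. \<Sum>m<?N. p m * t k * R k m)" by (rule sum.swap)
    also have "\<dots> = (\<Sum>k<?N. t k * (\<Sum>m<?N. p m * R k m))"
      by (simp add: sum_distrib_left ac_simps)
    finally have e: "Re (Gf n \<rho> \<Delta>) = (\<Sum>k<?N. t k * (\<Sum>m<?N. p m * R k m))" .
    have "\<forall>k<?N. \<forall>m<?N. 0 \<le> R k m \<and> R k m \<le> 1"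
      unfolding R_def using qP_bounds nw nu by blast
    then show ?thesis unfolding e by (rule wbound[OF p0 p1 t0])
  qed
  have b2: "\<bar>Re (Gf n \<Delta> \<sigma>)\<bar> \<le> (\<Sum>k<?N. \<bar>t k\<bar>) / 2"
  proof -
    define R where "R = (\<lambda>k m. Re (qP n (\<lambda>s. u k (s div ?N) * w' m (s mod ?N))))"
    have "Re (Gf n \<Delta> \<sigma>) = (\<Sum>k<?N. \<Sum>m<?N. t k * p' m * R k m)"
      unfolding ss Ds Re_Gf_smat R_def ..
    also have "\<dots> = (\<Sum>k<?N. t k * (\<Sum>m<?N. p' m * R k m))"
      by (simp add: sum_distrib_left ac_simps)
    finally have e: "Re (Gf n \<Delta> \<sigma>) = (\<Sum>k<?N. t k * (\<Sum>m<?N. p' m * R k m))" .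
    have "\<forall>k<?N. \<forall>m<?N. 0 \<le> R k m \<and> R k m \<le> 1"
      unfolding R_def using qP_bounds nw' nu by blast
    then show ?thesis unfolding e by (rule wbound[OF p0' p1' t0])
  qed
  have "\<bar>Cmeas n \<rho> - Cmeas n \<sigma>\<bar> \<le> \<bar>Re (Gf n \<rho> \<Delta>)\<bar> + \<bar>Re (Gf n \<Delta> \<sigma>)\<bar>" unfolding C by simp
  also have "\<dots> \<le> (\<Sum>k<?N. \<bar>t k\<bar>)" using b1 b2 by simp
  finally show ?thesis using tn unfolding \<Delta>_def by simp
qed


end
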